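(* Let $F$ be a field, $n\ge 2$, and let $r_1,\ldots,r_m$ be strictly upper triangular matrix units in $M_n(F)$ (i.e. each $r_l=e_{i_lj_l}$ with $i_l<j_l$) such that the associative product $r_1r_2\cdots r_m\neq 0$. Then for $\sigma\in\mathcal{S}_m$: (i) $r_{\sigma^{-1}(1)}r_{\sigma^{-1}(2)}\cdots r_{\sigma^{-1}(m)}\neq 0$ if and only if $\sigma$ is the identity; (ii) the left-normed commutator $[r_{\sigma^{-1}(1)},r_{\sigma^{-1}(2)},\ldots,r_{\sigma^{-1}(m)}]\neq 0$ if and only if $\sigma\in\mathscr{T}_m$.
   Context: $e_{ij}$ denotes the matrix unit with $1$ in position $(i,j)$ and $0$ elsewhere. Left-normed commutators: $[x_1,x_2]=x_1x_2-x_2x_1$ and $[x_1,\ldots,x_k]=[[x_1,\ldots,x_{k-1}],x_k]$ for $k>2$. $\mathcal{S}_m$ is the group of bijections of $I_m=\{1,\ldots,m\}$, with $\sigma\circ\tau$ meaning apply $\tau$ first. $\mathscr{T}_m=\{\sigma\in\mathcal{S}_m \mid \exists t\in I_m:\ \sigma(1)>\sigma(2)>\cdots>\sigma(t)=1,\ \sigma(t)<\sigma(t+1)<\cdots<\sigma(m)\}$. *)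

theory Defs
  imports "Jordan_Normal_Form.Matrix" "HOL-Combinatorics.Permutations"
begin

text \<open>Matrix unit e_ij in M_n(F) (0-based indices i, j < n).\<close>
definition mat_unit :: "nat \<Rightarrow> nat \<Rightarrow> nat \<Rightarrow> 'a::field mat" where
  "mat_unit n i j = mat n n (\<lambda>(a, b). if a = i \<and> b = j then 1 else 0)"

definition mat_list_prod :: "nat \<Rightarrow> 'a::field mat list \<Rightarrow> 'a mat" where
  "mat_list_prod n Ms = foldr (\<lambda>A B. A * B) Ms (1\<^sub>m n)"

fun lcomm :: "'a::field mat list \<Rightarrow> 'a mat" where
  "lcomm [] = undefined"
| "lcomm [x] = x"
| "lcomm (x # y # xs) = lcomm ((x * y - y * x) # xs)"

definition Tset :: "nat \<Rightarrow> (nat \<Rightarrow> nat) set" where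
  "Tset m = {\<sigma>. \<sigma> permutes {1..m} \<and>
     (\<exists>t\<in>{1..m}. \<sigma> t = 1 \<and>
        (\<forall>k. 1 \<le> k \<and> k < t \<longrightarrow> \<sigma> k > \<sigma> (Suc k)) \<and>
        (\<forall>k. t \<le> k \<and> k < m \<longrightarrow> \<sigma> k < \<sigma> (Suc k)))}"

end

theory Submission
  imports Defs
begin


lemma mat_unit_carrier[simp]: "mat_unit n x y \<in> carrier_mat n n"
  by (simp add: mat_unit_def)
lemma mat_unit_dims[simp]: "dim_row (mat_unit n x y) = n" "dim_col (mat_unit n x y) = n"
  by (simp_all add: mat_unit_def)

lemma mat_unit_mult:
  assumes "b < n" 
  shows "(mat_unit n a b :: 'a::field mat) * mat_unit n c d = (if b = c then mat_unit n a d else 0\<^sub>m n n)"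
proof (rule eq_matI)
  fix x y assume xy: "x < dim_row (if b = c then mat_unit n a d else (0\<^sub>m n n :: 'a mat))"
      "y < dim_col (if b = c then mat_unit n a d else (0\<^sub>m n n :: 'a mat))"
  hence x: "x < n" and y: "y < n" by (auto split: if_splits)
  have "(mat_unit n a b * mat_unit n c d :: 'a mat) $$ (x, y) = (\<Sum>k\<in>{0..<n}. (if x = a \<and> k = b then 1 else 0) * (if k = c \<and> y = d then 1 else (0::'a)))"
    using x y by (simp add: mat_unit_def scalar_prod_def)
  also have "\<dots> = (\<Sum>k\<in>{0..<n}. if k = b then (if x = a \<and> b = c \<and> y = d then 1 else 0) else (0::'a))"
    by (rule sum.cong) auto
  also have "\<dots> = (if x = a \<and> b = c \<and> y = d then 1 else 0)"
    using assms by simp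
  finally show "(mat_unit n a b * mat_unit n c d :: 'a mat) $$ (x, y) = (if b = c then mat_unit n a d else 0\<^sub>m n n) $$ (x, y)"
    using x y by (simp add: mat_unit_def)
qed auto

lemma mat_unit_nz: "x < n \<Longrightarrow> y < n \<Longrightarrow> c \<noteq> 0 \<Longrightarrow> c \<cdot>\<^sub>m (mat_unit n x y :: 'a::field mat) \<noteq> 0\<^sub>m n n"
proof
  assume "x < n" "y < n" "c \<noteq> 0" "c \<cdot>\<^sub>m (mat_unit n x y :: 'a::field mat) = 0\<^sub>m n n"
  hence "(c \<cdot>\<^sub>m (mat_unit n x y :: 'a::field mat)) $$ (x,y) = 0\<^sub>m n n $$ (x,y)" by simp
  thus False using \<open>x < n\<close> \<open>y < n\<close> \<open>c \<noteq> 0\<close> by (simp add: mat_unit_def)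
qed

lemma lcomm_zero: "\<forall>y\<in>set xs. y \<in> carrier_mat n n \<Longrightarrow> lcomm (0\<^sub>m n n # xs) = (0\<^sub>m n n :: 'a::field mat)"
proof (induction xs)
  case (Cons y xs)
  have "0\<^sub>m n n * y - y * 0\<^sub>m n n = (0\<^sub>m n n :: 'a mat)" using Cons.prems by auto
  thus ?case using Cons by simp
qed simp

fun chained :: "(nat \<times> nat) list \<Rightarrow> bool" where
  "chained (x # y # zs) = (snd x = fst y \<and> chained (y # zs))"
| "chained _ = True"

lemma prod_units:
  "ps \<noteq> [] \<Longrightarrow> \<forall>(x,y)\<in>set ps. x < n \<and> y < n \<Longrightarrow>
   mat_list_prod n (map (\<lambda>(x,y). mat_unit n x y) ps) = (if chained ps then mat_unit n (fst (hd ps)) (snd (last ps)) else (0\<^sub>m n n :: 'a::field mat))"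
proof (induction ps)
  case (Cons p ps)
  show ?case
  proof (cases "ps = []")
    case True thus ?thesis by (cases p) (simp add: mat_list_prod_def)
  next
    case False
    obtain q qs where ps: "ps = q # qs" using False by (cases ps) auto
    have "mat_list_prod n (map (\<lambda>(x,y). mat_unit n x y) (p # ps)) =
      (mat_unit n (fst p) (snd p) :: 'a mat) * mat_list_prod n (map (\<lambda>(x,y). mat_unit n x y) ps)"
      by (cases p) (simp add: mat_list_prod_def)
    also have "\<dots> = mat_unit n (fst p) (snd p) * (if chained ps then mat_unit n (fst (hd ps)) (snd (last ps)) else 0\<^sub>m n n)"
      using Cons False by auto
    also have "\<dots> = (if chained (p # ps) then mat_unit n (fst (hd (p#ps))) (snd (last (p#ps))) else 0\<^sub>m n n)"
      using Cons.prems ps by (cases p) (auto simp: mat_unit_mult)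
    finally show ?thesis .
  qed
qed simp

lemma chained_upt: "chained (map f [a..<b]) \<longleftrightarrow> (\<forall>l. a \<le> l \<and> Suc l < b \<longrightarrow> snd (f l) = fst (f (Suc l)))"
proof (induction "b - a" arbitrary: a)
  case 0 thus ?case by auto
next
  case (Suc d)
  hence ab: "a < b" by auto
  show ?case
  proof (cases "Suc a < b")
    case True
    have "[a..<b] = a # Suc a # [Suc (Suc a)..<b]" using True by (simp add: upt_conv_Cons)
    moreover have "[Suc a..<b] = Suc a # [Suc (Suc a)..<b]" using True by (simp add: upt_conv_Cons)
    ultimately have "chained (map f [a..<b]) = (snd (f a) = fst (f (Suc a)) \<and> chained (map f [Suc a..<b]))" by simp
    also have "\<dots> = (snd (f a) = fst (f (Suc a)) \<and> (\<forall>l. Suc a \<le> l \<and> Suc l < b \<longrightarrow> snd (f l) = fst (f (Suc l))))"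
      using Suc by simp
    also have "\<dots> = (\<forall>l. a \<le> l \<and> Suc l < b \<longrightarrow> snd (f l) = fst (f (Suc l)))"
      using True by (auto simp: le_Suc_eq Suc_le_eq) (metis le_neq_implies_less Suc_leI)
    finally show ?thesis .
  next
    case False
    hence "[a..<b] = [a]" using ab by (simp add: upt_conv_Cons)
    thus ?thesis using False by auto
  qed
qed

lemma inc_chain: "(\<forall>k. a \<le> k \<and> k < b \<longrightarrow> f k < (f (Suc k) :: nat)) \<Longrightarrow> a \<le> x \<Longrightarrow> x < y \<Longrightarrow> y \<le> b \<Longrightarrow> f x < f y"
proof (induction y)
  case (Suc y)
  have 1: "f y < f (Suc y)" using Suc by auto
  show ?case
  proof (cases "x = y")
    case False
    hence "f x < f y" using Suc by auto
    thus ?thesis using 1 by linarith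
  qed (use 1 in simp)
qed simp

lemma dec_chain: "(\<forall>k. a \<le> k \<and> k < b \<longrightarrow> f k > (f (Suc k) :: nat)) \<Longrightarrow> a \<le> x \<Longrightarrow> x < y \<Longrightarrow> y \<le> b \<Longrightarrow> f x > f y"
proof (induction y)
  case (Suc y)
  have 1: "f y > f (Suc y)" using Suc by auto
  show ?case
  proof (cases "x = y")
    case False
    hence "f x > f y" using Suc by auto
    thus ?thesis using 1 by linarith
  qed (use 1 in simp)
qed simp



lemma comm_step:
  fixes c :: "'a::field"
  assumes "b < n" "d < n"
  shows "(c \<cdot>\<^sub>m mat_unit n a b) * mat_unit n e d - mat_unit n e d * (c \<cdot>\<^sub>m mat_unit n a b)
    = (if b = e then c \<cdot>\<^sub>m mat_unit n a d else 0\<^sub>m n n) - (if d = a then c \<cdot>\<^sub>m mat_unit n e b else 0\<^sub>m n n)"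
proof -
  have "(c \<cdot>\<^sub>m mat_unit n a b) * mat_unit n e d = c \<cdot>\<^sub>m (mat_unit n a b * mat_unit n e d)"
    using mult_smult_assoc_mat[of "mat_unit n a b" n n "mat_unit n e d" n c] by simp
  moreover have "mat_unit n e d * (c \<cdot>\<^sub>m mat_unit n a b) = c \<cdot>\<^sub>m (mat_unit n e d * mat_unit n a b)"
    using mult_smult_distrib[of "mat_unit n e d" n n "mat_unit n a b" n c] by simp
  ultimately show ?thesis using assms by (simp add: mat_unit_mult)
qed

lemma mz: "(A::'a::field mat) \<in> carrier_mat n n \<Longrightarrow> A - 0\<^sub>m n n = A" by (rule eq_matI) auto
lemma zm: "(A::'a::field mat) \<in> carrier_mat n n \<Longrightarrow> 0\<^sub>m n n - c \<cdot>\<^sub>m A = (-c) \<cdot>\<^sub>m A" by (rule eq_matI) auto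

lemma G:
  fixes n m :: nat and a :: "nat \<Rightarrow> nat" and \<sigma> \<tau> :: "nat \<Rightarrow> nat" and c :: "'a::field"
  assumes amono: "\<And>x y. x < y \<Longrightarrow> y \<le> m \<Longrightarrow> a x < a y"
    and alt: "\<And>x. x \<le> m \<Longrightarrow> a x < n"
    and perm: "\<sigma> permutes {1..m}" and tau: "\<tau> = inv_into UNIV \<sigma>"
  shows "1 \<le> p \<Longrightarrow> p \<le> q \<Longrightarrow> q \<le> m \<Longrightarrow> c \<noteq> 0 \<Longrightarrow> s \<le> m + 1
    \<Longrightarrow> (\<forall>k\<in>{1..m}. \<sigma> k < s \<longleftrightarrow> p \<le> k \<and> k \<le> q)
    \<Longrightarrow> lcomm (c \<cdot>\<^sub>m mat_unit n (a (p-1)) (a q) # map (\<lambda>k. mat_unit n (a (\<tau> k - 1)) (a (\<tau> k))) [s..<m+1]) \<noteq> 0\<^sub>m n n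
     \<longleftrightarrow> ((\<forall>k. 1 \<le> k \<and> k < p \<longrightarrow> \<sigma> k > \<sigma> (Suc k)) \<and> (\<forall>k. q \<le> k \<and> k < m \<longrightarrow> \<sigma> k < \<sigma> (Suc k)))"
proof (induction "m + 1 - s" arbitrary: s p q c)
  have ainj: "a x = a y \<longleftrightarrow> x = y" if "x \<le> m" "y \<le> m" for x y
    using amono[of x y] amono[of y x] that by (cases x y rule: linorder_cases) auto
  have sin: "\<sigma> k \<in> {1..m}" if "k \<in> {1..m}" for k using permutes_in_image[OF perm, of k] that by blast
  case 0
  hence s: "s = m + 1" by simp
  have "p \<le> 1" using bspec[OF 0(7), of 1] sin[of 1] 0(2-4) s by auto
  moreover have "m \<le> q" using bspec[OF 0(7), of m] sin[of m] 0(2-4) s by auto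
  ultimately have "p = 1" "q = m" using 0 by auto
  thus ?case using s 0 alt mat_unit_nz[of "a 0" n "a m" c] by simp
next
  case (Suc d s p q c)
  have ainj: "a x = a y \<longleftrightarrow> x = y" if "x \<le> m" "y \<le> m" for x y
    using amono[of x y] amono[of y x] that by (cases x y rule: linorder_cases) auto
  have sin: "\<sigma> k \<in> {1..m}" if "k \<in> {1..m}" for k using permutes_in_image[OF perm, of k] that by blast
  have sinj: "\<And>x y. \<sigma> x = \<sigma> y \<longleftrightarrow> x = y" using perm by (metis permutes_inj injD)
  have taup: "\<tau> permutes {1..m}" using perm tau by (simp add: permutes_inv)
  have st: "\<And>x. \<sigma> (\<tau> x) = x" using perm tau by (simp add: permutes_inverses)
  have sm: "s \<le> m" and s1: "1 \<le> s" using Suc by auto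
  define k where "k = \<tau> s"
  have k: "k \<in> {1..m}" using taup sm s1 k_def permutes_in_image[OF taup, of s] by simp
  have sk: "\<sigma> k = s" using st k_def by simp
  have kpq: "\<not> (p \<le> k \<and> k \<le> q)" using Suc.prems(6) k sk by auto
  have ups: "[s..<m+1] = s # [Suc s..<m+1]" using sm by (simp add: upt_conv_Cons)
  let ?f = "\<lambda>k. mat_unit n (a (\<tau> k - 1)) (a (\<tau> k)) :: 'a mat"
  let ?X = "c \<cdot>\<^sub>m mat_unit n (a (p-1)) (a q) :: 'a mat"
  have L: "lcomm (?X # map ?f [s..<m+1]) = lcomm ((?X * mat_unit n (a (k-1)) (a k) - mat_unit n (a (k-1)) (a k) * ?X) # map ?f [Suc s..<m+1])"
    using ups k_def by simp
  have C: "?X * mat_unit n (a (k-1)) (a k) - mat_unit n (a (k-1)) (a k) * ?X =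
     (if q = k - 1 then c \<cdot>\<^sub>m mat_unit n (a (p-1)) (a k) else 0\<^sub>m n n) - (if k = p - 1 then c \<cdot>\<^sub>m mat_unit n (a (k-1)) (a q) else 0\<^sub>m n n)"
    using comm_step[of "a q" n "a k" c "a (p-1)" "a (k-1)"] alt Suc.prems k ainj by auto
  have IHgen: "\<And>p' q' c'. 1 \<le> p' \<Longrightarrow> p' \<le> q' \<Longrightarrow> q' \<le> m \<Longrightarrow> c' \<noteq> 0 \<Longrightarrow>
     (\<forall>x\<in>{1..m}. \<sigma> x < Suc s \<longleftrightarrow> p' \<le> x \<and> x \<le> q') \<Longrightarrow>
     lcomm (c' \<cdot>\<^sub>m mat_unit n (a (p'-1)) (a q') # map ?f [Suc s..<m+1]) \<noteq> 0\<^sub>m n n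
     \<longleftrightarrow> ((\<forall>k. 1 \<le> k \<and> k < p' \<longrightarrow> \<sigma> k > \<sigma> (Suc k)) \<and> (\<forall>k. q' \<le> k \<and> k < m \<longrightarrow> \<sigma> k < \<sigma> (Suc k)))"
    using Suc.hyps(1)[of "Suc s"] Suc.hyps(2) sm by auto
  have lt_s: "\<And>x. x \<in> {1..m} \<Longrightarrow> \<sigma> x < Suc s \<longleftrightarrow> \<sigma> x < s \<or> x = k"
    using sk sinj by (metis less_Suc_eq)
  consider (R) "k = Suc q" | (Lft) "Suc k = p" | (N) "k \<noteq> Suc q" "Suc k \<noteq> p" by blast
  thus ?case
  proof cases
    case R
    have C': "?X * mat_unit n (a (k-1)) (a k) - mat_unit n (a (k-1)) (a k) * ?X = c \<cdot>\<^sub>m mat_unit n (a (p-1)) (a (Suc q))"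
    proof -
      have "Suc q \<noteq> p - 1" using Suc.prems(2) by simp
      thus ?thesis using C R Suc.prems by (simp add: mz)
    qed
    have inv: "\<forall>x\<in>{1..m}. \<sigma> x < Suc s \<longleftrightarrow> p \<le> x \<and> x \<le> Suc q"
      using lt_s Suc.prems(6) Suc.prems(1-3) R by (auto simp: le_Suc_eq)
    have qs: "\<sigma> q < \<sigma> (Suc q)" using Suc.prems(6) Suc.prems(1-3) R sk by auto
    have "(\<forall>k. q \<le> k \<and> k < m \<longrightarrow> \<sigma> k < \<sigma> (Suc k)) \<longleftrightarrow> (\<forall>k. Suc q \<le> k \<and> k < m \<longrightarrow> \<sigma> k < \<sigma> (Suc k))"
    proof
      assume B: "\<forall>k. Suc q \<le> k \<and> k < m \<longrightarrow> \<sigma> k < \<sigma> (Suc k)"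
      show "\<forall>k. q \<le> k \<and> k < m \<longrightarrow> \<sigma> k < \<sigma> (Suc k)"
      proof (intro allI impI)
        fix x assume "q \<le> x \<and> x < m" thus "\<sigma> x < \<sigma> (Suc x)" using B qs by (cases "x = q") auto
      qed
    qed auto
    thus ?thesis using L C' IHgen[OF Suc.prems(1) _ _ Suc.prems(4) inv] Suc.prems R k by simp
  next
    case Lft
    have C': "?X * mat_unit n (a (k-1)) (a k) - mat_unit n (a (k-1)) (a k) * ?X = (- c) \<cdot>\<^sub>m mat_unit n (a (k-1)) (a q)"
    proof -
      have "q \<noteq> k - 1" "k = p - 1" using Lft Suc.prems by auto
      thus ?thesis using C zm[of "mat_unit n (a (k-1)) (a q)" n c] by simp
    qed
    have inv: "\<forall>x\<in>{1..m}. \<sigma> x < Suc s \<longleftrightarrow> k \<le> x \<and> x \<le> q"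
      using lt_s Suc.prems(6) Suc.prems(1-3) Lft by (auto simp: le_Suc_eq)
    have ps: "\<sigma> p < \<sigma> k" using Suc.prems(6) Suc.prems(1-3) Lft sk by auto
    have "(\<forall>x. 1 \<le> x \<and> x < p \<longrightarrow> \<sigma> x > \<sigma> (Suc x)) \<longleftrightarrow> (\<forall>x. 1 \<le> x \<and> x < k \<longrightarrow> \<sigma> x > \<sigma> (Suc x))"
    proof
      assume B: "\<forall>x. 1 \<le> x \<and> x < k \<longrightarrow> \<sigma> x > \<sigma> (Suc x)"
      show "\<forall>x. 1 \<le> x \<and> x < p \<longrightarrow> \<sigma> x > \<sigma> (Suc x)"
      proof (intro allI impI)
        fix x assume "1 \<le> x \<and> x < p" thus "\<sigma> x > \<sigma> (Suc x)" using B ps Lft by (cases "x = k") auto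
      qed
    qed (use Lft in auto)
    moreover have "k - 1 = p - 1 - 1" using Lft by simp
    ultimately show ?thesis using L C' IHgen[of k q "-c", OF _ _ _ _ inv] Suc.prems Lft k by simp
  next
    case N
    have "q \<noteq> k - 1" using N k by auto
    moreover have "k \<noteq> p - 1" using N Suc.prems(1) by auto
    ultimately have C': "?X * mat_unit n (a (k-1)) (a k) - mat_unit n (a (k-1)) (a k) * ?X = 0\<^sub>m n n"
      using C by simp
    have lhs: "lcomm (?X # map ?f [s..<m+1]) = 0\<^sub>m n n"
      using L C' lcomm_zero[of "map ?f [Suc s..<m+1]" n] by simp
    have "\<not> ((\<forall>x. 1 \<le> x \<and> x < p \<longrightarrow> \<sigma> x > \<sigma> (Suc x)) \<and> (\<forall>x. q \<le> x \<and> x < m \<longrightarrow> \<sigma> x < \<sigma> (Suc x)))"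
    proof
      assume H: "(\<forall>x. 1 \<le> x \<and> x < p \<longrightarrow> \<sigma> x > \<sigma> (Suc x)) \<and> (\<forall>x. q \<le> x \<and> x < m \<longrightarrow> \<sigma> x < \<sigma> (Suc x))"
      show False
      proof (cases "k > q")
        case True
        hence kq: "Suc q < k" using N by simp
        have "\<sigma> (Suc q) < \<sigma> k" using inc_chain[of q m \<sigma> "Suc q" k] H kq k by auto
        moreover have "\<not> \<sigma> (Suc q) < s" using Suc.prems(6) kq k by auto
        ultimately show False using sk by simp
      next
        case False
        hence kp: "Suc k < p" using N kpq by simp
        have "\<sigma> k > \<sigma> (p - 1)" using dec_chain[of 1 p \<sigma> k "p - 1"] H kp k by auto
        moreover have "p - 1 \<in> {1..m}" "\<not> (p \<le> p - 1)" using Suc.prems(1-3) kp k by auto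
        hence "\<not> \<sigma> (p - 1) < s" using bspec[OF Suc.prems(6), of "p - 1"] by blast
        ultimately show False using sk by simp
      qed
    qed
    thus ?thesis using lhs by simp
  qed
qed



lemma smult_one_unit: "(1::'a::field) \<cdot>\<^sub>m mat_unit n x y = mat_unit n x y"
  by (rule eq_matI) (auto simp: mat_unit_def)

theorem mainTheorem2:
  fixes n m :: nat and r :: "nat \<Rightarrow> 'a::field mat" and i j :: "nat \<Rightarrow> nat"
    and \<sigma> :: "nat \<Rightarrow> nat"
  assumes "n \<ge> 2" and "m \<ge> 1"
    and "\<And>l. l \<in> {1..m} \<Longrightarrow> i l < j l \<and> j l < n \<and> r l = mat_unit n (i l) (j l)"
    and "mat_list_prod n (map r [1..<m+1]) \<noteq> 0\<^sub>m n n"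
    and "\<sigma> permutes {1..m}"
  shows "(mat_list_prod n (map (\<lambda>k. r (inv_into UNIV \<sigma> k)) [1..<m+1]) \<noteq> 0\<^sub>m n n \<longleftrightarrow> \<sigma> = id)
       \<and> (lcomm (map (\<lambda>k. r (inv_into UNIV \<sigma> k)) [1..<m+1]) \<noteq> 0\<^sub>m n n \<longleftrightarrow> \<sigma> \<in> Tset m)"
proof -
  note ass = assms(3)
  define \<tau> where "\<tau> = inv_into UNIV \<sigma>"
  have perm: "\<sigma> permutes {1..m}" by fact
  have taup: "\<tau> permutes {1..m}" using perm \<tau>_def by (simp add: permutes_inv)
  have st: "\<And>x. \<sigma> (\<tau> x) = x" "\<And>x. \<tau> (\<sigma> x) = x" using perm \<tau>_def by (simp_all add: permutes_inverses)
  have tin: "\<tau> k \<in> {1..m}" if "k \<in> {1..m}" for k using permutes_in_image[OF taup, of k] that by blast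
  have sin: "\<sigma> k \<in> {1..m}" if "k \<in> {1..m}" for k using permutes_in_image[OF perm, of k] that by blast
  have mapr: "map r [1..<m+1] = map (\<lambda>(x,y). mat_unit n x y) (map (\<lambda>l. (i l, j l)) [1..<m+1])"
    using ass by auto
  have ilt: "\<forall>(x,y)\<in>set (map (\<lambda>l. (i l, j l)) [1..<m+1]). x < n \<and> y < n"
    using ass by fastforce
  have "chained (map (\<lambda>l. (i l, j l)) [1..<m+1])"
  proof (rule ccontr)
    assume "\<not> ?thesis"
    moreover have "mat_list_prod n (map r [1..<m+1]) = (if chained (map (\<lambda>l. (i l, j l)) [1..<m+1]) then mat_unit n (fst (hd (map (\<lambda>l. (i l, j l)) [1..<m+1]))) (snd (last (map (\<lambda>l. (i l, j l)) [1..<m+1]))) else 0\<^sub>m n n)"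
      unfolding mapr by (rule prod_units[OF _ ilt]) (use assms(2) in simp)
    ultimately have "mat_list_prod n (map r [1..<m+1]) = 0\<^sub>m n n" by simp
    thus False using assms(4) by simp
  qed
  hence chain0: "\<forall>l. 1 \<le> l \<and> Suc l < m + 1 \<longrightarrow> snd (i l, j l) = fst (i (Suc l), j (Suc l))"
    by (subst (asm) chained_upt[of "\<lambda>l. (i l, j l)" 1 "m+1"])
  hence chain: "\<And>l. 1 \<le> l \<Longrightarrow> l < m \<Longrightarrow> j l = i (Suc l)" by auto
  define a where "a l = (if l = 0 then i 1 else j l)" for l
  have ia: "i l = a (l - 1)" if "l \<in> {1..m}" for l
    using that chain[of "l - 1"] by (cases "l = 1") (auto simp: a_def)
  have ja: "j l = a l" if "l \<in> {1..m}" for l using that by (auto simp: a_def)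
  have astep: "a k < a (Suc k)" if "k < m" for k
    using ass[of "Suc k"] ia[of "Suc k"] ja[of "Suc k"] that by auto
  have amono: "a x < a y" if "x < y" "y \<le> m" for x y
    using inc_chain[of 0 m a x y] astep that by auto
  have alt: "a x < n" if "x \<le> m" for x
    using that ass[of x] ass[of 1] assms(2) by (auto simp: a_def)
  have ainj: "a x = a y \<longleftrightarrow> x = y" if "x \<le> m" "y \<le> m" for x y
    using amono[of x y] amono[of y x] that by (cases x y rule: linorder_cases) auto
  have rk: "r k = mat_unit n (a (k - 1)) (a k)" if "k \<in> {1..m}" for k
    using ass[OF that] ia[OF that] ja[OF that] by simp
  have mapt: "map (\<lambda>k. r (\<tau> k)) [1..<m+1] = map (\<lambda>k. mat_unit n (a (\<tau> k - 1)) (a (\<tau> k))) [1..<m+1]"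
    using rk tin by auto
  have P1: "mat_list_prod n (map (\<lambda>k. r (\<tau> k)) [1..<m+1]) \<noteq> 0\<^sub>m n n \<longleftrightarrow> \<sigma> = id"
  proof -
    let ?ps = "map (\<lambda>k. (a (\<tau> k - 1), a (\<tau> k))) [1..<m+1]"
    have e: "map (\<lambda>k. r (\<tau> k)) [1..<m+1] = map (\<lambda>(x,y). mat_unit n x y) ?ps"
      using mapt by simp
    have pl: "\<forall>(x,y)\<in>set ?ps. x < n \<and> y < n" using alt tin by fastforce
    define X where "X = (mat_unit n (fst (hd ?ps)) (snd (last ?ps)) :: 'a mat)"
    have pe: "mat_list_prod n (map (\<lambda>k. r (\<tau> k)) [1..<m+1]) = (if chained ?ps then X else 0\<^sub>m n n)"
      unfolding e X_def by (rule prod_units[OF _ pl]) (use assms(2) in simp)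
    have ne: "?ps \<noteq> []" using assms(2) by simp
    have hh: "fst (hd ?ps) < n \<and> snd (last ?ps) < n"
      using bspec[OF pl hd_in_set[OF ne]] bspec[OF pl last_in_set[OF ne]] by (simp only: case_prod_beta)
    have "(1::'a) \<cdot>\<^sub>m mat_unit n (fst (hd ?ps)) (snd (last ?ps)) \<noteq> (0\<^sub>m n n :: 'a mat)"
      by (rule mat_unit_nz[OF conjunct1[OF hh] conjunct2[OF hh] one_neq_zero])
    hence Xnz: "X \<noteq> 0\<^sub>m n n"
      unfolding X_def by (simp only: smult_one_unit not_False_eq_True)
    have "mat_list_prod n (map (\<lambda>k. r (\<tau> k)) [1..<m+1]) \<noteq> 0\<^sub>m n n \<longleftrightarrow> chained ?ps"
      unfolding pe using Xnz by simp
    also have "\<dots> \<longleftrightarrow> (\<forall>l. 1 \<le> l \<and> l < m \<longrightarrow> \<tau> (Suc l) = Suc (\<tau> l))"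
    proof -
      have "\<And>l. 1 \<le> l \<Longrightarrow> l < m \<Longrightarrow> a (\<tau> l) = a (\<tau> (Suc l) - 1) \<longleftrightarrow> \<tau> (Suc l) = Suc (\<tau> l)"
      proof -
        fix l assume "1 \<le> l" "l < m"
        hence "\<tau> l \<in> {1..m}" "\<tau> (Suc l) \<in> {1..m}" using tin by auto
        thus "a (\<tau> l) = a (\<tau> (Suc l) - 1) \<longleftrightarrow> \<tau> (Suc l) = Suc (\<tau> l)" using ainj by auto
      qed
      moreover have "chained ?ps \<longleftrightarrow> (\<forall>l. 1 \<le> l \<and> Suc l < m + 1 \<longrightarrow> snd (a (\<tau> l - 1), a (\<tau> l)) = fst (a (\<tau> (Suc l) - 1), a (\<tau> (Suc l))))"
        by (rule chained_upt)
      ultimately show ?thesis by auto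
    qed
    also have "\<dots> \<longleftrightarrow> \<sigma> = id"
    proof
      assume H: "\<forall>l. 1 \<le> l \<and> l < m \<longrightarrow> \<tau> (Suc l) = Suc (\<tau> l)"
      have lin: "\<tau> l = \<tau> 1 + (l - 1)" if "1 \<le> l" "l \<le> m" for l
        using that
      proof (induction l)
        case (Suc l) thus ?case using H by (cases "l = 0") auto
      qed simp
      have "\<tau> m \<le> m" using tin[of m] assms(2) by auto
      moreover have "1 \<le> \<tau> 1" using tin[of 1] assms(2) by auto
      ultimately have t1: "\<tau> 1 = 1" using lin[of m] assms(2) by auto
      have "\<tau> x = x" for x
      proof (cases "x \<in> {1..m}")
        case True thus ?thesis using lin[of x] t1 by auto
      next
        case False thus ?thesis using permutes_not_in[OF taup] by auto
      qed
      hence "\<sigma> x = x" for x using st(1)[of x] by simp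
      thus "\<sigma> = id" by auto
    next
      assume "\<sigma> = id"
      hence "\<tau> = id" using \<tau>_def by (simp add: inv_id)
      thus "\<forall>l. 1 \<le> l \<and> l < m \<longrightarrow> \<tau> (Suc l) = Suc (\<tau> l)" by simp
    qed
    finally show ?thesis .
  qed
  have P2: "lcomm (map (\<lambda>k. r (\<tau> k)) [1..<m+1]) \<noteq> 0\<^sub>m n n \<longleftrightarrow> \<sigma> \<in> Tset m"
  proof -
    define t where "t = \<tau> 1"
    have t: "t \<in> {1..m}" using tin[of 1] assms(2) t_def by auto
    have ups: "[1..<m+1] = 1 # [2..<m+1]" using assms(2) by (subst upt_conv_Cons) (auto simp: numeral_2_eq_2)
    have eq: "lcomm (map (\<lambda>k. r (\<tau> k)) [1..<m+1]) =
      lcomm ((1::'a) \<cdot>\<^sub>m mat_unit n (a (t - 1)) (a t) # map (\<lambda>k. mat_unit n (a (\<tau> k - 1)) (a (\<tau> k))) [2..<m+1])"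
      unfolding mapt unfolding ups by (simp only: list.map(2) smult_one_unit t_def)
    have inv: "\<forall>k\<in>{1..m}. \<sigma> k < 2 \<longleftrightarrow> t \<le> k \<and> k \<le> t"
    proof
      fix k assume k: "k \<in> {1..m}"
      have "\<sigma> k < 2 \<longleftrightarrow> \<sigma> k = 1" using sin[OF k] by auto
      also have "\<dots> \<longleftrightarrow> k = t" using st t_def by metis
      finally show "\<sigma> k < 2 \<longleftrightarrow> t \<le> k \<and> k \<le> t" by auto
    qed
    have "lcomm (map (\<lambda>k. r (\<tau> k)) [1..<m+1]) \<noteq> 0\<^sub>m n n \<longleftrightarrow>
      ((\<forall>k. 1 \<le> k \<and> k < t \<longrightarrow> \<sigma> k > \<sigma> (Suc k)) \<and> (\<forall>k. t \<le> k \<and> k < m \<longrightarrow> \<sigma> k < \<sigma> (Suc k)))"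
      unfolding eq
      by (rule G[where a=a and \<sigma>=\<sigma> and \<tau>=\<tau> and n=n and m=m and p=t and q=t and c="1::'a" and s=2, OF amono alt perm \<tau>_def])
        (use t assms(2) inv in auto)
    also have "\<dots> \<longleftrightarrow> \<sigma> \<in> Tset m"
    proof
      assume "((\<forall>k. 1 \<le> k \<and> k < t \<longrightarrow> \<sigma> k > \<sigma> (Suc k)) \<and> (\<forall>k. t \<le> k \<and> k < m \<longrightarrow> \<sigma> k < \<sigma> (Suc k)))"
      moreover have "\<sigma> t = 1" using st t_def by simp
      ultimately show "\<sigma> \<in> Tset m" using t perm unfolding Tset_def by blast
    next
      assume "\<sigma> \<in> Tset m"
      then obtain t' where t': "t' \<in> {1..m}" "\<sigma> t' = 1"
        "\<forall>k. 1 \<le> k \<and> k < t' \<longrightarrow> \<sigma> k > \<sigma> (Suc k)" "\<forall>k. t' \<le> k \<and> k < m \<longrightarrow> \<sigma> k < \<sigma> (Suc k)"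
        unfolding Tset_def by blast
      have "t' = t" using t'(2) st t_def by metis
      thus "((\<forall>k. 1 \<le> k \<and> k < t \<longrightarrow> \<sigma> k > \<sigma> (Suc k)) \<and> (\<forall>k. t \<le> k \<and> k < m \<longrightarrow> \<sigma> k < \<sigma> (Suc k)))"
        using t' by blast
    qed
    finally show ?thesis .
  qed
  show ?thesis using P1 P2 \<tau>_def by simp
qed


end
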